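(* For every even integer $k\ge 4$, the graph $M_{\rm II}(k)$ is not word-representable.
   Context: For even $k\ge4$, $M_{\rm II}(k)$ is the split graph with clique $C=\{c_1,\dots,c_k\}$ and independent set $I=\{b_1,b_2,a_1,\dots,a_{k-2}\}$, where $N(b_1)=\{c_1,\dots,c_{k-2},c_k\}$, $N(b_2)=\{c_2,\dots,c_k\}$, and $N(a_i)=\{c_i,c_{i+1}\}$ for $1\le i\le k-2$. A graph $G=(V,E)$ is word-representable if there is a word $w$ over $V$ such that for all distinct $a,b\in V$, $ab\in E$ iff $a$ and $b$ alternate in $w$ (i.e. the subsequence of $w$ formed by all occurrences of $a$ and $b$ is $abab\cdots$ or $baba\cdots$). *)

theory Defs
  imports Main
begin

definition alternate_in :: "'a list \<Rightarrow> 'a \<Rightarrow> 'a \<Rightarrow> bool" where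
  "alternate_in w a b \<longleftrightarrow>
     (let u = filter (\<lambda>x. x = a \<or> x = b) w in
      \<forall>i. Suc i < length u \<longrightarrow> u ! i \<noteq> u ! Suc i)"

definition represents :: "'a set \<Rightarrow> ('a \<Rightarrow> 'a \<Rightarrow> bool) \<Rightarrow> 'a list \<Rightarrow> bool" where
  "represents V E w \<longleftrightarrow> set w = V \<and>
     (\<forall>a\<in>V. \<forall>b\<in>V. a \<noteq> b \<longrightarrow> (E a b \<longleftrightarrow> alternate_in w a b))"

definition word_representable :: "'a set \<Rightarrow> ('a \<Rightarrow> 'a \<Rightarrow> bool) \<Rightarrow> bool" where
  "word_representable V E \<longleftrightarrow> (\<exists>w. represents V E w)"

datatype vtx = C nat | B1 | B2 | A nat

definition MII_V :: "nat \<Rightarrow> vtx set" where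
  "MII_V k = C ` {1..k} \<union> {B1, B2} \<union> A ` {1..k-2}"

fun MII_adj0 :: "nat \<Rightarrow> vtx \<Rightarrow> vtx \<Rightarrow> bool" where
  "MII_adj0 k (C i) (C j) = (i \<noteq> j)"
| "MII_adj0 k B1 (C j) = (j \<in> {1..k-2} \<or> j = k)"
| "MII_adj0 k B2 (C j) = (j \<in> {2..k})"
| "MII_adj0 k (A i) (C j) = (j = i \<or> j = i + 1)"
| "MII_adj0 k _ _ = False"

definition MII_E :: "nat \<Rightarrow> vtx \<Rightarrow> vtx \<Rightarrow> bool" where
  "MII_E k x y \<longleftrightarrow> MII_adj0 k x y \<or> MII_adj0 k y x"

end

theory Submission
  imports Defs
begin


definition cnt :: "'a \<Rightarrow> 'a list \<Rightarrow> nat" where "cnt x l = length (filter ((=) x) l)"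
definition lead :: "'a list \<Rightarrow> 'a \<Rightarrow> 'a \<Rightarrow> bool" where
 "lead w a b \<longleftrightarrow> (\<forall>t. cnt b (take t w) \<le> cnt a (take t w) \<and> cnt a (take t w) \<le> cnt b (take t w) + 1)"
definition alt :: "'a list \<Rightarrow> bool" where
 "alt u \<longleftrightarrow> (\<forall>i. Suc i < length u \<longrightarrow> u ! i \<noteq> u ! Suc i)"

lemma alt_Nil: "alt []" by (simp add: alt_def)

lemma alt_Cons: "alt (x#u) \<longleftrightarrow> alt u \<and> (u = [] \<or> x \<noteq> hd u)"
proof (cases u)
  case Nil then show ?thesis by (simp add: alt_def)
next
  case (Cons y v)
  have "alt (x#y#v) \<longleftrightarrow> x \<noteq> y \<and> alt (y#v)"
    unfolding alt_def
    apply (rule iffI)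
     apply (intro conjI)
      apply (metis length_Cons nth_Cons_0 nth_Cons_Suc zero_less_Suc Suc_less_eq)
     apply (metis length_Cons nth_Cons_Suc Suc_less_eq)
    apply clarify
    apply (case_tac i)
     apply simp
    apply simp
    done
  then show ?thesis using Cons by auto
qed

lemma cnt_Cons: "cnt x (y#l) = (if x = y then Suc (cnt x l) else cnt x l)"
  by (simp add: cnt_def)
lemma cnt_Nil: "cnt x [] = 0" by (simp add: cnt_def)

lemma lead_Nil: "lead [] a b" by (simp add: lead_def cnt_def)

lemma lead_Cons_a: assumes "a \<noteq> b" shows "lead (a#w) a b \<longleftrightarrow> lead w b a"
proof
  assume L: "lead (a#w) a b"
  show "lead w b a" unfolding lead_def
  proof
    fix t
    from L have "cnt b (take (Suc t) (a#w)) \<le> cnt a (take (Suc t) (a#w)) \<and> cnt a (take (Suc t) (a#w)) \<le> cnt b (take (Suc t) (a#w)) + 1"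
      unfolding lead_def by blast
    then show "cnt a (take t w) \<le> cnt b (take t w) \<and> cnt b (take t w) \<le> cnt a (take t w) + 1"
      using assms by (simp add: cnt_Cons)
  qed
next
  assume L: "lead w b a"
  show "lead (a#w) a b" unfolding lead_def
  proof
    fix t
    show "cnt b (take t (a#w)) \<le> cnt a (take t (a#w)) \<and> cnt a (take t (a#w)) \<le> cnt b (take t (a#w)) + 1"
    proof (cases t)
      case 0 then show ?thesis by (simp add: cnt_Nil)
    next
      case (Suc s)
      from L have "cnt a (take s w) \<le> cnt b (take s w) \<and> cnt b (take s w) \<le> cnt a (take s w) + 1"
        unfolding lead_def by blast
      then show ?thesis using Suc assms by (simp add: cnt_Cons)
    qed
  qed
qed

lemma lead_Cons_b: assumes "a \<noteq> b" shows "\<not> lead (b#w) a b"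
proof
  assume "lead (b#w) a b"
  then have "cnt b (take 1 (b#w)) \<le> cnt a (take 1 (b#w))" unfolding lead_def by blast
  then show False using assms by (simp add: cnt_Cons cnt_Nil)
qed

lemma lead_Cons_o: assumes "x \<noteq> a" "x \<noteq> b" shows "lead (x#w) a b \<longleftrightarrow> lead w a b"
proof
  assume L: "lead (x#w) a b"
  show "lead w a b" unfolding lead_def
  proof
    fix t
    from L have "cnt b (take (Suc t) (x#w)) \<le> cnt a (take (Suc t) (x#w)) \<and> cnt a (take (Suc t) (x#w)) \<le> cnt b (take (Suc t) (x#w)) + 1"
      unfolding lead_def by blast
    then show "cnt b (take t w) \<le> cnt a (take t w) \<and> cnt a (take t w) \<le> cnt b (take t w) + 1"
      using assms by (simp add: cnt_Cons)
  qed
next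
  assume L: "lead w a b"
  show "lead (x#w) a b" unfolding lead_def
  proof
    fix t
    show "cnt b (take t (x#w)) \<le> cnt a (take t (x#w)) \<and> cnt a (take t (x#w)) \<le> cnt b (take t (x#w)) + 1"
    proof (cases t)
      case 0 then show ?thesis by (simp add: cnt_Nil)
    next
      case (Suc s)
      from L have "cnt b (take s w) \<le> cnt a (take s w) \<and> cnt a (take s w) \<le> cnt b (take s w) + 1"
        unfolding lead_def by blast
      then show ?thesis using Suc assms by (simp add: cnt_Cons)
    qed
  qed
qed

lemma filter_swap: "filter (\<lambda>x. x = b \<or> x = a) w = filter (\<lambda>x. x = a \<or> x = b) w"
  by (rule filter_cong) auto

lemma lead_alt: "a \<noteq> b \<Longrightarrow> lead w a b \<longleftrightarrow>
   (alt (filter (\<lambda>x. x = a \<or> x = b) w) \<and> (filter (\<lambda>x. x = a \<or> x = b) w = [] \<or> hd (filter (\<lambda>x. x = a \<or> x = b) w) = a))"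
proof (induction w arbitrary: a b)
  case Nil then show ?case by (simp add: lead_Nil alt_Nil)
next
  case (Cons x w)
  let ?u = "filter (\<lambda>x. x = a \<or> x = b) w"
  have hdu: "?u = [] \<or> hd ?u = a \<or> hd ?u = b"
  proof (cases "?u = []")
    case False
    then have "hd ?u \<in> set ?u" by (rule hd_in_set)
    then show ?thesis by simp
  qed simp
  show ?case
  proof (cases "x = a")
    case True
    have "lead (x#w) a b \<longleftrightarrow> lead w b a" using True Cons.prems lead_Cons_a by metis
    also have "\<dots> \<longleftrightarrow> alt ?u \<and> (?u = [] \<or> hd ?u = b)"
      using Cons.IH[of b a] Cons.prems filter_swap[of b a w] by (simp add: filter_swap)
    also have "\<dots> \<longleftrightarrow> alt (x # ?u)" using hdu True Cons.prems by (auto simp: alt_Cons)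
    finally show ?thesis using True by simp
  next
    case False
    show ?thesis
    proof (cases "x = b")
      case True
      then show ?thesis using lead_Cons_b[OF Cons.prems] Cons.prems by simp
    next
      case False2: False
      then show ?thesis using lead_Cons_o[OF False False2] Cons.IH[OF Cons.prems] False by simp
    qed
  qed
qed

lemma alt_lead: assumes "a \<noteq> b" shows "alternate_in w a b \<longleftrightarrow> lead w a b \<or> lead w b a"
proof -
  let ?u = "filter (\<lambda>x. x = a \<or> x = b) w"
  have hdu: "?u = [] \<or> hd ?u = a \<or> hd ?u = b"
  proof (cases "?u = []")
    case False
    then have "hd ?u \<in> set ?u" by (rule hd_in_set)
    then show ?thesis by simp
  qed simp
  have "alternate_in w a b \<longleftrightarrow> alt ?u" by (simp add: alternate_in_def alt_def Let_def)
  moreover have "lead w a b \<longleftrightarrow> alt ?u \<and> (?u = [] \<or> hd ?u = a)" using lead_alt[OF assms] .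
  moreover have "lead w b a \<longleftrightarrow> alt ?u \<and> (?u = [] \<or> hd ?u = b)"
    using lead_alt[of b a w] assms filter_swap[of a b w] by simp
  ultimately show ?thesis using hdu by auto
qed

lemma cnt_app1: "cnt x (l @ [y]) = (if x = y then Suc (cnt x l) else cnt x l)"
  by (simp add: cnt_def)

lemma lead_anti: assumes "a \<in> set w" "a \<noteq> b" "lead w a b" "lead w b a" shows False
proof -
  obtain i where i: "i < length w" "w ! i = a" using assms(1) by (metis in_set_conv_nth)
  have tk: "take (Suc i) w = take i w @ [a]" using i by (simp add: take_Suc_conv_app_nth)
  have "cnt a (take i w) = cnt b (take i w)" using assms(3,4) unfolding lead_def by (meson le_antisym)
  moreover have "cnt a (take (Suc i) w) = cnt b (take (Suc i) w)" using assms(3,4) unfolding lead_def by (meson le_antisym)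
  ultimately show False using tk assms(2) by (simp add: cnt_app1)
qed

lemma lead_cyc: assumes "lead w a b" "lead w b c" "lead w c a" shows "lead w b a"
  unfolding lead_def
proof
  fix t
  have "cnt b (take t w) \<le> cnt a (take t w) \<and> cnt a (take t w) \<le> cnt b (take t w) + 1"
       "cnt c (take t w) \<le> cnt b (take t w) \<and> cnt b (take t w) \<le> cnt c (take t w) + 1"
       "cnt a (take t w) \<le> cnt c (take t w) \<and> cnt c (take t w) \<le> cnt a (take t w) + 1"
    using assms unfolding lead_def by blast+
  then show "cnt a (take t w) \<le> cnt b (take t w) \<and> cnt b (take t w) \<le> cnt a (take t w) + 1" by linarith
qed

lemma lead_st: assumes "lead w a b" "lead w b c" "lead w c d" "lead w a d" shows "lead w a c" "lead w b d"
proof -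
  show "lead w a c" unfolding lead_def
  proof
    fix t
    have "cnt b (take t w) \<le> cnt a (take t w) \<and> cnt a (take t w) \<le> cnt b (take t w) + 1"
       "cnt c (take t w) \<le> cnt b (take t w) \<and> cnt b (take t w) \<le> cnt c (take t w) + 1"
       "cnt d (take t w) \<le> cnt c (take t w) \<and> cnt c (take t w) \<le> cnt d (take t w) + 1"
       "cnt d (take t w) \<le> cnt a (take t w) \<and> cnt a (take t w) \<le> cnt d (take t w) + 1"
      using assms unfolding lead_def by blast+
    then show "cnt c (take t w) \<le> cnt a (take t w) \<and> cnt a (take t w) \<le> cnt c (take t w) + 1" by linarith
  qed
  show "lead w b d" unfolding lead_def
  proof
    fix t
    have "cnt b (take t w) \<le> cnt a (take t w) \<and> cnt a (take t w) \<le> cnt b (take t w) + 1"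
       "cnt c (take t w) \<le> cnt b (take t w) \<and> cnt b (take t w) \<le> cnt c (take t w) + 1"
       "cnt d (take t w) \<le> cnt c (take t w) \<and> cnt c (take t w) \<le> cnt d (take t w) + 1"
       "cnt d (take t w) \<le> cnt a (take t w) \<and> cnt a (take t w) \<le> cnt d (take t w) + 1"
      using assms unfolding lead_def by blast+
    then show "cnt d (take t w) \<le> cnt b (take t w) \<and> cnt b (take t w) \<le> cnt d (take t w) + 1" by linarith
  qed
qed


definition nxt :: "nat \<Rightarrow> nat \<Rightarrow> nat" where "nxt k u = (if Suc u = k then 0 else Suc u)"
definition wrap :: "nat \<Rightarrow> nat \<Rightarrow> nat" where "wrap k x = (if x < k then x else x - k)"
definition btw :: "nat \<Rightarrow> nat \<Rightarrow> nat \<Rightarrow> bool" where "btw a m b \<longleftrightarrow> (a < m \<and> m < b) \<or> (b < m \<and> m < a)"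

lemma nxt_inj: "a < k \<Longrightarrow> b < k \<Longrightarrow> nxt k a = nxt k b \<Longrightarrow> a = b"
  by (auto simp: nxt_def split: if_splits)

lemma dir:
  fixes q :: "nat \<Rightarrow> nat"
  assumes k: "k \<ge> 4" and bd: "\<forall>i\<in>{1..k}. q i < k" and inj: "inj_on q {1..k}"
    and st: "\<forall>i. 1 \<le> i \<and> i \<le> k-2 \<longrightarrow> q (Suc i) = nxt k (q i) \<or> q i = nxt k (q (Suc i))"
  shows "(\<forall>i. 1 \<le> i \<and> i \<le> k-2 \<longrightarrow> q (Suc i) = nxt k (q i)) \<or> (\<forall>i. 1 \<le> i \<and> i \<le> k-2 \<longrightarrow> q i = nxt k (q (Suc i)))"
proof -
  have noflip1: False if "1 \<le> i" "Suc i \<le> k-2" "q (Suc i) = nxt k (q i)" "q (Suc i) = nxt k (q (Suc (Suc i)))" for i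
  proof -
    have m: "i \<in> {1..k}" "Suc (Suc i) \<in> {1..k}" using that k by auto
    have "nxt k (q i) = nxt k (q (Suc (Suc i)))" using that(3,4) by simp
    moreover have "q i < k" "q (Suc (Suc i)) < k" using bd m by auto
    ultimately have "q i = q (Suc (Suc i))" using nxt_inj by blast
    note this m
    then have "i = Suc (Suc i)" using inj by (blast dest: inj_onD)
    then show False by simp
  qed
  have noflip2: False if "1 \<le> i" "Suc i \<le> k-2" "q i = nxt k (q (Suc i))" "q (Suc (Suc i)) = nxt k (q (Suc i))" for i
  proof -
    have m: "i \<in> {1..k}" "Suc (Suc i) \<in> {1..k}" using that k by auto
    have "q i = q (Suc (Suc i))" using that(3,4) by simp
    note this m
    then have "i = Suc (Suc i)" using inj by (blast dest: inj_onD)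
    then show False by simp
  qed
  show ?thesis
  proof (cases "q 2 = nxt k (q 1)")
    case True
    note T = True
    have "\<forall>i. 1 \<le> i \<and> i \<le> k-2 \<longrightarrow> q (Suc i) = nxt k (q i)"
    proof (intro allI impI)
      fix i assume "1 \<le> i \<and> i \<le> k-2"
      then show "q (Suc i) = nxt k (q i)"
      proof (induction i)
        case 0 then show ?case by simp
      next
        case (Suc n)
        show ?case
        proof (cases "n = 0")
          case True then show ?thesis using T by (simp add: numeral_2_eq_2)
        next
          case False
          have n1: "1 \<le> n" "Suc n \<le> k-2" using False Suc.prems by auto
          have IH: "q (Suc n) = nxt k (q n)" using Suc.IH n1 by simp
          have "q (Suc (Suc n)) = nxt k (q (Suc n)) \<or> q (Suc n) = nxt k (q (Suc (Suc n)))" using st[rule_format, of "Suc n"] n1 by auto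
          then show ?thesis using noflip1[of n] n1 IH by blast
        qed
      qed
    qed
    then show ?thesis by blast
  next
    case False
    then have F: "q 1 = nxt k (q 2)" using st[rule_format, of 1] k by (simp add: numeral_2_eq_2)
    have "\<forall>i. 1 \<le> i \<and> i \<le> k-2 \<longrightarrow> q i = nxt k (q (Suc i))"
    proof (intro allI impI)
      fix i assume "1 \<le> i \<and> i \<le> k-2"
      then show "q i = nxt k (q (Suc i))"
      proof (induction i)
        case 0 then show ?case by simp
      next
        case (Suc n)
        show ?case
        proof (cases "n = 0")
          case True then show ?thesis using F by (simp add: numeral_2_eq_2)
        next
          case False
          have n1: "1 \<le> n" "Suc n \<le> k-2" using False Suc.prems by auto
          have IH: "q n = nxt k (q (Suc n))" using Suc.IH n1 by simp
          have "q (Suc n) = nxt k (q (Suc (Suc n))) \<or> q (Suc (Suc n)) = nxt k (q (Suc n))" using st[rule_format, of "Suc n"] n1 by auto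
          then show ?thesis using noflip2[of n] n1 IH by blast
        qed
      qed
    qed
    then show ?thesis by blast
  qed
qed

lemma nxt_wrap: "t < k \<Longrightarrow> j + 2 \<le> k \<Longrightarrow> nxt k (wrap k (t + j)) = wrap k (t + Suc j)"
  unfolding nxt_def wrap_def by auto

lemma fwd_closed:
  fixes q :: "nat \<Rightarrow> nat"
  assumes k: "k \<ge> 4" and t: "q 1 < k"
    and f: "\<forall>i. 1 \<le> i \<and> i \<le> k-2 \<longrightarrow> q (Suc i) = nxt k (q i)"
  shows "j \<le> k-2 \<Longrightarrow> q (Suc j) = wrap k (q 1 + j)"
proof (induction j)
  case 0 then show ?case using t by (simp add: wrap_def)
next
  case (Suc j)
  have "q (Suc (Suc j)) = nxt k (q (Suc j))" using f[rule_format, of "Suc j"] Suc.prems by simp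
  also have "\<dots> = nxt k (wrap k (q 1 + j))" using Suc by simp
  also have "\<dots> = wrap k (q 1 + Suc j)" using nxt_wrap[OF t, of j] Suc.prems k by simp
  finally show ?case .
qed

lemma bwd_closed:
  fixes q :: "nat \<Rightarrow> nat"
  assumes k: "k \<ge> 4" and t: "q (k-1) < k"
    and f: "\<forall>i. 1 \<le> i \<and> i \<le> k-2 \<longrightarrow> q i = nxt k (q (Suc i))"
  shows "j \<le> k-2 \<Longrightarrow> q (k - 1 - j) = wrap k (q (k-1) + j)"
proof (induction j)
  case 0 then show ?case using t by (simp add: wrap_def)
next
  case (Suc j)
  have e: "Suc (k - 1 - Suc j) = k - 1 - j" using Suc.prems k by simp
  have r: "1 \<le> k - 1 - Suc j \<and> k - 1 - Suc j \<le> k-2" using Suc.prems k by arith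
  have "q (k - 1 - Suc j) = nxt k (q (Suc (k - 1 - Suc j)))" using f[rule_format, OF r] .
  also have "\<dots> = nxt k (wrap k (q (k-1) + j))" using Suc e by simp
  also have "\<dots> = wrap k (q (k-1) + Suc j)" using nxt_wrap[OF t, of j] Suc.prems k by simp
  finally show ?case .
qed

lemma missing:
  assumes "t < k" "x < k" "\<forall>j. j \<le> k-2 \<longrightarrow> x \<noteq> wrap k (t + j)" "k \<ge> 4"
  shows "x = wrap k (t + (k-1))"
proof (cases "t \<le> x")
  case True
  have "x = wrap k (t + (x - t))" using True assms by (simp add: wrap_def)
  then have "\<not> x - t \<le> k - 2" using assms(3) by blast
  then have "t = 0" "x = k - 1" using True assms(1,2,4) by auto
  then show ?thesis using assms(4) by (simp add: wrap_def)
next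
  case False
  have "x = wrap k (t + (x + k - t))" using False assms by (simp add: wrap_def)
  then have "\<not> x + k - t \<le> k - 2" using assms(3) by blast
  then have "x + 1 = t" using False assms(1,2,4) by auto
  then show ?thesis using assms(4) unfolding wrap_def by (cases "t + (k-1) < k") auto
qed

lemma fin_fwd: assumes "t < k" "k \<ge> 4"
  shows "(btw (wrap k (t+1)) t (wrap k (t+(k-1))) \<and> \<not> btw (wrap k (t+1)) (wrap k (t+(k-2))) (wrap k (t+(k-1)))) \<or>
         (btw (wrap k (t+1)) (wrap k (t+(k-2))) (wrap k (t+(k-1))) \<and> \<not> btw (wrap k (t+1)) t (wrap k (t+(k-1))))"
proof -
  consider "t = 0" | "t = 1" | "t = k - 1" | "2 \<le> t \<and> t < k - 1" using assms by linarith
  then show ?thesis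
  proof cases
    case 1 then show ?thesis using assms unfolding wrap_def btw_def by (simp; arith)
  next
    case 2 then show ?thesis using assms unfolding wrap_def btw_def by (simp; arith)
  next
    case 3 then show ?thesis using assms unfolding wrap_def btw_def by (simp; arith)
  next
    case 4 then show ?thesis using assms unfolding wrap_def btw_def by (simp; arith)
  qed
qed
lemma fin_bwd: assumes "t < k" "k \<ge> 4"
  shows "(btw (wrap k (t+(k-3))) (wrap k (t+(k-2))) (wrap k (t+(k-1))) \<and> \<not> btw (wrap k (t+(k-3))) t (wrap k (t+(k-1)))) \<or>
         (btw (wrap k (t+(k-3))) t (wrap k (t+(k-1))) \<and> \<not> btw (wrap k (t+(k-3))) (wrap k (t+(k-2))) (wrap k (t+(k-1))))"
proof -
  consider "t = 0" | "t = 1" | "t = 2" | "3 \<le> t" using assms by linarith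
  then show ?thesis
  proof cases
    case 1 then show ?thesis using assms unfolding wrap_def btw_def by (simp; arith)
  next
    case 2 then show ?thesis using assms unfolding wrap_def btw_def by (simp; arith)
  next
    case 3 then show ?thesis using assms unfolding wrap_def btw_def by (simp; arith)
  next
    case 4 then show ?thesis using assms unfolding wrap_def btw_def by (simp; arith)
  qed
qed

lemma arith_main:
  fixes q :: "nat \<Rightarrow> nat"
  assumes k: "k \<ge> 4" and bd: "\<forall>i\<in>{1..k}. q i < k" and inj: "inj_on q {1..k}"
    and st: "\<forall>i. 1 \<le> i \<and> i \<le> k-2 \<longrightarrow> q (Suc i) = nxt k (q i) \<or> q i = nxt k (q (Suc i))"
  shows "(btw (q 2) (q 1) (q k) \<and> \<not> btw (q 2) (q (k-1)) (q k)) \<or>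
         (btw (q 2) (q (k-1)) (q k) \<and> \<not> btw (q 2) (q 1) (q k))"
  using dir[OF k bd inj st]
proof
  assume f: "\<forall>i. 1 \<le> i \<and> i \<le> k-2 \<longrightarrow> q (Suc i) = nxt k (q i)"
  define t where "t = q 1"
  have t: "t < k" using bd k by (simp add: t_def)
  have t1: "q 1 < k" using t t_def by simp
  have cf: "j \<le> k-2 \<Longrightarrow> q (Suc j) = wrap k (t + j)" for j
    using fwd_closed[OF k t1 f, of j] unfolding t_def by blast
  have q2: "q 2 = wrap k (t + 1)" using cf[of 1] k by (simp add: numeral_2_eq_2)
  have qk1: "q (k-1) = wrap k (t + (k-2))" using cf[of "k-2"] k by (simp add: Suc_diff_Suc numeral_2_eq_2)
  have qk: "q k = wrap k (t + (k-1))"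
  proof (rule missing[OF t _ _ k])
    show "q k < k" using bd k by simp
    show "\<forall>j. j \<le> k-2 \<longrightarrow> q k \<noteq> wrap k (t + j)"
    proof (intro allI impI)
      fix j assume j: "j \<le> k-2"
      have "Suc j \<in> {1..k}" "k \<in> {1..k}" "Suc j \<noteq> k" using j k by auto
      then have "q (Suc j) \<noteq> q k" using inj by (meson inj_onD)
      then show "q k \<noteq> wrap k (t + j)" using cf[OF j] by simp
    qed
  qed
  show ?thesis unfolding q2 qk1 qk t_def[symmetric] using fin_fwd[OF t k] by simp
next
  assume f: "\<forall>i. 1 \<le> i \<and> i \<le> k-2 \<longrightarrow> q i = nxt k (q (Suc i))"
  define t where "t = q (k-1)"
  have t: "t < k" using bd k by (simp add: t_def)
  have t1: "q (k-1) < k" using t t_def by simp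
  have cf: "j \<le> k-2 \<Longrightarrow> q (k - 1 - j) = wrap k (t + j)" for j
    using bwd_closed[OF k t1 f, of j] unfolding t_def by blast
  have q2: "q 2 = wrap k (t + (k-3))" using cf[of "k-3"] k by (simp add: numeral_3_eq_3 numeral_2_eq_2)
  have q1: "q 1 = wrap k (t + (k-2))" using cf[of "k-2"] k by simp
  have qk: "q k = wrap k (t + (k-1))"
  proof (rule missing[OF t _ _ k])
    show "q k < k" using bd k by simp
    show "\<forall>j. j \<le> k-2 \<longrightarrow> q k \<noteq> wrap k (t + j)"
    proof (intro allI impI)
      fix j assume j: "j \<le> k-2"
      have "k - 1 - j \<in> {1..k}" "k \<in> {1..k}" "k - 1 - j \<noteq> k" using j k by auto
      then have "q (k - 1 - j) \<noteq> q k" using inj by (meson inj_onD)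
      then show "q k \<noteq> wrap k (t + j)" using cf[OF j] by simp
    qed
  qed
  show ?thesis unfolding q2 q1 qk t_def[symmetric] using fin_bwd[OF t k] by simp
qed



locale wr =
  fixes k :: nat and w :: "vtx list"
  assumes k4: "k \<ge> 4" and rep: "represents (MII_V k) (MII_E k) w"
begin

definition R where "R x y \<longleftrightarrow> x \<in> MII_V k \<and> y \<in> MII_V k \<and> x \<noteq> y \<and> lead w x y"

lemma E_sym: "MII_E k x y = MII_E k y x" by (auto simp: MII_E_def)
lemma E_irr: "\<not> MII_E k x x" by (cases x) (auto simp: MII_E_def)
lemma E_CC[simp]: "MII_E k (C i) (C j) = (i \<noteq> j)" by (auto simp: MII_E_def)
lemma E_AC[simp]: "MII_E k (A i) (C j) = (j = i \<or> j = Suc i)" by (auto simp: MII_E_def)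
lemma E_B1C[simp]: "MII_E k B1 (C j) = (1 \<le> j \<and> j \<le> k-2 \<or> j = k)" by (auto simp: MII_E_def)
lemma E_B2C[simp]: "MII_E k B2 (C j) = (2 \<le> j \<and> j \<le> k)" by (auto simp: MII_E_def)
lemma E_B1B2[simp]: "\<not> MII_E k B1 B2" by (auto simp: MII_E_def)

lemma V_C[simp]: "C i \<in> MII_V k \<longleftrightarrow> 1 \<le> i \<and> i \<le> k" by (auto simp: MII_V_def)
lemma V_A[simp]: "A i \<in> MII_V k \<longleftrightarrow> 1 \<le> i \<and> i \<le> k-2" by (auto simp: MII_V_def)
lemma V_B[simp]: "B1 \<in> MII_V k" "B2 \<in> MII_V k" by (auto simp: MII_V_def)

lemma adjR: "x \<in> MII_V k \<Longrightarrow> y \<in> MII_V k \<Longrightarrow> x \<noteq> y \<Longrightarrow> MII_E k x y \<longleftrightarrow> R x y \<or> R y x"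
  using rep alt_lead[of x y w] unfolding represents_def R_def by auto

lemma R_E: "R x y \<Longrightarrow> MII_E k x y"
  using adjR unfolding R_def by blast

lemma R_anti: "R x y \<Longrightarrow> R y x \<Longrightarrow> False"
  using rep lead_anti[of x w y] unfolding represents_def R_def by auto

lemma R_cyc: "R x y \<Longrightarrow> R y z \<Longrightarrow> R z x \<Longrightarrow> False"
proof -
  assume a: "R x y" "R y z" "R z x"
  then have "lead w y x" using lead_cyc[of w x y z] unfolding R_def by blast
  then have "R y x" using a unfolding R_def by blast
  then show False using a R_anti by blast
qed

lemma R_st: assumes "R a b" "R b c" "R c d" "R a d" shows "MII_E k a c" "MII_E k b d"
proof -
  have "lead w a c" "lead w b d" using lead_st[of w a b c d] assms unfolding R_def by blast+
  moreover have "a \<noteq> c" using assms R_anti by blast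
  moreover have "b \<noteq> d" using assms R_anti by blast
  ultimately have "R a c" "R b d" using assms unfolding R_def by blast+
  then show "MII_E k a c" "MII_E k b d" using R_E by blast+
qed

lemma H: assumes "R x m" "R m z" "b \<in> MII_V k" "MII_E k b x" "MII_E k b z" "\<not> MII_E k b m" "MII_E k x z"
  shows "R x b \<and> R b z"
proof -
  have xz: "x \<in> MII_V k" "z \<in> MII_V k" using assms(1,2) unfolding R_def by auto
  have ne: "b \<noteq> x" "b \<noteq> z" using assms(4,5) E_irr by auto
  have o1: "R x b \<or> R b x" using adjR[of b x] assms(3,4) xz ne by auto
  have o2: "R z b \<or> R b z" using adjR[of b z] assms(3,5) xz ne by auto
  have Rxz: "R x z"
  proof -
    have "x \<noteq> z" using assms(1,2) R_anti by blast
    then have "R x z \<or> R z x" using adjR[of x z] xz assms(7) by auto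
    then show ?thesis using assms(1,2) R_cyc by blast
  qed
  show ?thesis
  proof (rule ccontr)
    assume "\<not> (R x b \<and> R b z)"
    then consider "R x b" "R z b" | "R b x" "R b z" | "R b x" "R z b" using o1 o2 by blast
    then show False
    proof cases
      case 1 then have "MII_E k m b" using R_st(2)[of x m z b] assms by blast
      then show False using assms(6) E_sym by metis
    next
      case 2 then have "MII_E k b m" using R_st(1)[of b x m z] assms by blast
      then show False using assms(6) by blast
    next
      case 3 then show False using Rxz R_cyc by blast
    qed
  qed
qed

lemma K: assumes "R x b" "R b z" "b' \<in> MII_V k" "MII_E k b' x" "MII_E k b' z" "\<not> MII_E k b b'"
   "\<not> MII_E k b' m'" "m' \<in> MII_V k" "MII_E k m' x" "MII_E k m' z" "R m' x \<or> R z m'" "MII_E k x z"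
  shows False
proof -
  have xz: "x \<in> MII_V k" "z \<in> MII_V k" using assms(1,2) unfolding R_def by auto
  have ne: "b' \<noteq> x" "b' \<noteq> z" "m' \<noteq> x" "m' \<noteq> z" using assms(4,5,9,10) E_irr by auto
  have Rxz: "R x z"
  proof -
    have "x \<noteq> z" using assms(1,2) R_anti by blast
    then have "R x z \<or> R z x" using adjR[of x z] xz assms(12) by auto
    then show ?thesis using assms(1,2) R_cyc by blast
  qed
  have o1: "R x b' \<or> R b' x" using adjR[of b' x] assms(3,4) xz ne by auto
  have o2: "R z b' \<or> R b' z" using adjR[of b' z] assms(3,5) xz ne by auto
  have o3: "R x m' \<or> R m' x" using adjR[of m' x] assms(8,9) xz ne by auto
  have o4: "R z m' \<or> R m' z" using adjR[of m' z] assms(8,10) xz ne by auto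
  have nbb: "\<not> MII_E k b' b" using assms(6) E_sym by metis
  have nbm: "\<not> MII_E k m' b'" using assms(7) E_sym by metis
  show False
  proof (cases "R z b'")
    case True
    have "R x b'" using o1 True Rxz R_cyc by blast
    then show False using R_st(2)[of x b z b'] assms(1,2) True assms(6) by blast
  next
    case False
    then have zb: "R b' z" using o2 by blast
    show False
    proof (cases "R b' x")
      case True
      then show False using R_st(1)[of b' x b z] assms(1,2) zb nbb by blast
    next
      case False
      then have xb: "R x b'" using o1 by blast
      show False using assms(11)
      proof
        assume mx: "R m' x"
        have "R m' z" using o4 mx Rxz R_cyc by blast
        then show False using R_st(1)[of m' x b' z] mx xb zb nbm by blast
      next
        assume zm: "R z m'"
        have "R x m'" using o3 zm Rxz R_cyc by blast
        then show False using R_st(2)[of x b' z m'] xb zb zm assms(7) by blast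
      qed
    qed
  qed
qed

definition pos :: "nat \<Rightarrow> nat" where "pos i = card {j \<in> {1..k}. R (C j) (C i)}"

lemma RC_mem: "R (C i) (C j) \<Longrightarrow> i \<in> {1..k} \<and> j \<in> {1..k} \<and> i \<noteq> j"
  unfolding R_def by auto

lemma CR: "i \<in> {1..k} \<Longrightarrow> j \<in> {1..k} \<Longrightarrow> i \<noteq> j \<Longrightarrow> R (C i) (C j) \<or> R (C j) (C i)"
  using adjR[of "C i" "C j"] by auto

lemma Rtrans: "R (C i) (C j) \<Longrightarrow> R (C j) (C l) \<Longrightarrow> R (C i) (C l)"
proof -
  assume a: "R (C i) (C j)" "R (C j) (C l)"
  have "i \<noteq> l" using a R_anti by blast
  then have "R (C i) (C l) \<or> R (C l) (C i)" using CR RC_mem a by blast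
  then show ?thesis using a R_cyc by blast
qed

lemma pos_lt: assumes "R (C i) (C j)" shows "pos i < pos j"
proof -
  have "{j' \<in> {1..k}. R (C j') (C i)} \<subset> {j' \<in> {1..k}. R (C j') (C j)}"
  proof
    show "{j' \<in> {1..k}. R (C j') (C i)} \<subseteq> {j' \<in> {1..k}. R (C j') (C j)}" using Rtrans assms by blast
    have "i \<in> {j' \<in> {1..k}. R (C j') (C j)}" using assms RC_mem by blast
    moreover have "i \<notin> {j' \<in> {1..k}. R (C j') (C i)}" unfolding R_def by blast
    ultimately show "{j' \<in> {1..k}. R (C j') (C i)} \<noteq> {j' \<in> {1..k}. R (C j') (C j)}" by blast
  qed
  then show ?thesis unfolding pos_def by (intro psubset_card_mono) auto
qed

lemma pos_bound: assumes "i \<in> {1..k}" shows "pos i < k"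
proof -
  have "{j \<in> {1..k}. R (C j) (C i)} \<subseteq> {1..k} - {i}" unfolding R_def by auto
  then have "pos i \<le> card ({1..k} - {i})" unfolding pos_def by (intro card_mono) auto
  also have "\<dots> = k - 1" using assms by simp
  finally show ?thesis using k4 by simp
qed

lemma pos_inj: "inj_on pos {1..k}"
proof (rule inj_onI)
  fix i j assume a: "i \<in> {1..k}" "j \<in> {1..k}" "pos i = pos j"
  show "i = j"
  proof (rule ccontr)
    assume "i \<noteq> j"
    then have "R (C i) (C j) \<or> R (C j) (C i)" using CR a by blast
    then show False using pos_lt a by fastforce
  qed
qed

lemma R_pos: "i \<in> {1..k} \<Longrightarrow> j \<in> {1..k} \<Longrightarrow> R (C i) (C j) \<longleftrightarrow> pos i < pos j"
proof
  assume "R (C i) (C j)" then show "pos i < pos j" by (rule pos_lt)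
next
  assume a: "i \<in> {1..k}" "j \<in> {1..k}" "pos i < pos j"
  then have "i \<noteq> j" by auto
  then have "R (C i) (C j) \<or> R (C j) (C i)" using CR a by blast
  then show "R (C i) (C j)" using pos_lt a by fastforce
qed

lemma pos_surj: assumes "p < k" shows "\<exists>j\<in>{1..k}. pos j = p"
proof -
  have "pos ` {1..k} \<subseteq> {..<k}" using pos_bound by auto
  moreover have "card (pos ` {1..k}) = card {..<k}" using card_image[OF pos_inj] by simp
  ultimately have "pos ` {1..k} = {..<k}" by (intro card_subset_eq) auto
  then show ?thesis using assms by (metis imageE lessThan_iff)
qed

lemma F: assumes v: "v \<in> MII_V k" and xy: "x \<in> {1..k}" "y \<in> {1..k}"
  and e: "MII_E k v (C x)" "MII_E k v (C y)" and only: "\<forall>j\<in>{1..k}. MII_E k v (C j) \<longrightarrow> j = x \<or> j = y"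
  and gap: "pos x + 1 < pos y"
  shows "pos x = 0 \<and> pos y = k - 1"
proof -
  have py: "pos y < k" using pos_bound xy by blast
  obtain m where m: "m \<in> {1..k}" "pos m = pos x + 1" using pos_surj[of "pos x + 1"] gap py by auto
  have mx: "m \<noteq> x" "m \<noteq> y" using m gap by auto
  have nm: "\<not> MII_E k v (C m)" using only m mx by blast
  have xy': "x \<noteq> y" using gap by auto
  have "R (C x) (C m)" "R (C m) (C y)" using R_pos m xy gap by auto
  then have vx: "R (C x) v" and vy: "R v (C y)" using H[of "C x" "C m" "C y" v] v e nm xy' by auto
  have "pos x = 0"
  proof (rule ccontr)
    assume "pos x \<noteq> 0"
    have "pos x - 1 < k" using py gap by linarith
    then obtain c where c: "c \<in> {1..k}" "pos c = pos x - 1" using pos_surj[of "pos x - 1"] by blast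
    have "c \<noteq> x" "c \<noteq> y" using c \<open>pos x \<noteq> 0\<close> gap by auto
    then have nc: "\<not> MII_E k v (C c)" using only c by blast
    have "R (C c) (C x)" "R (C c) (C y)" using R_pos c xy \<open>pos x \<noteq> 0\<close> gap by auto
    then have "MII_E k (C c) v" using R_st(1)[of "C c" "C x" v "C y"] vx vy by blast
    then show False using nc E_sym by metis
  qed
  moreover have "pos y = k - 1"
  proof (rule ccontr)
    assume "pos y \<noteq> k - 1"
    have "pos y + 1 < k" using py \<open>pos y \<noteq> k - 1\<close> by linarith
    then obtain c where c: "c \<in> {1..k}" "pos c = pos y + 1" using pos_surj[of "pos y + 1"] by blast
    have "c \<noteq> x" "c \<noteq> y" using c gap by auto
    then have nc: "\<not> MII_E k v (C c)" using only c by blast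
    have "R (C y) (C c)" "R (C x) (C c)" using R_pos c xy gap by auto
    then have "MII_E k v (C c)" using R_st(2)[of "C x" v "C y" "C c"] vx vy by blast
    then show False using nc by blast
  qed
  ultimately show ?thesis by blast
qed

lemma step: assumes "1 \<le> i" "i \<le> k - 2"
  shows "pos (Suc i) = nxt k (pos i) \<or> pos i = nxt k (pos (Suc i))"
proof -
  have v: "A i \<in> MII_V k" using assms by simp
  have ij: "i \<in> {1..k}" "Suc i \<in> {1..k}" using assms k4 by auto
  have ne: "pos i \<noteq> pos (Suc i)" using pos_inj ij by (metis inj_onD n_not_Suc_n)
  have only: "\<forall>j\<in>{1..k}. MII_E k (A i) (C j) \<longrightarrow> j = i \<or> j = Suc i" by simp
  have only': "\<forall>j\<in>{1..k}. MII_E k (A i) (C j) \<longrightarrow> j = Suc i \<or> j = i" by auto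
  have b1: "pos i < k" "pos (Suc i) < k" using pos_bound ij by auto
  show ?thesis
  proof (cases "pos i < pos (Suc i)")
    case True
    show ?thesis
    proof (cases "pos (Suc i) = pos i + 1")
      case True then show ?thesis using b1 by (simp add: nxt_def)
    next
      case False
      then have "pos i = 0 \<and> pos (Suc i) = k - 1" using F[OF v ij(1) ij(2) _ _ only] \<open>pos i < pos (Suc i)\<close> by simp
      then show ?thesis using k4 by (simp add: nxt_def)
    qed
  next
    case False
    then have lt: "pos (Suc i) < pos i" using ne by simp
    show ?thesis
    proof (cases "pos i = pos (Suc i) + 1")
      case True then show ?thesis using b1 by (simp add: nxt_def)
    next
      case False
      then have "pos (Suc i) = 0 \<and> pos i = k - 1" using F[OF v ij(2) ij(1) _ _ only'] lt by simp
      then show ?thesis using k4 by (simp add: nxt_def)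
    qed
  qed
qed

lemma HK1: assumes mem: "x \<in> {1..k}" "z \<in> {1..k}" "m \<in> {1..k}" "m' \<in> {1..k}"
  and bb: "b \<in> MII_V k" "b' \<in> MII_V k" "\<not> MII_E k b b'"
  and eb: "MII_E k b (C x)" "MII_E k b (C z)" "\<not> MII_E k b (C m)"
  and eb': "MII_E k b' (C x)" "MII_E k b' (C z)" "\<not> MII_E k b' (C m')"
  and ord: "pos x < pos m" "pos m < pos z" "\<not> (pos x < pos m' \<and> pos m' < pos z)"
  shows False
proof -
  have m'ne: "m' \<noteq> x" "m' \<noteq> z" using eb eb' by auto
  have "x \<noteq> z" using ord by auto
  have r: "R (C x) (C m)" "R (C m) (C z)" using R_pos mem ord by auto
  have Exz: "MII_E k (C x) (C z)" using \<open>x \<noteq> z\<close> by simp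
  have h: "R (C x) b \<and> R b (C z)" using H[OF r bb(1) eb Exz] .
  have "pos m' \<noteq> pos x" "pos m' \<noteq> pos z" using m'ne pos_inj mem by (metis inj_onD)+
  then have "pos m' < pos x \<or> pos z < pos m'" using ord by auto
  then have "R (C m') (C x) \<or> R (C z) (C m')" using R_pos mem by auto
  then show False using K[of "C x" b "C z" b' "C m'"] h bb eb' Exz m'ne mem by simp
qed

lemma HK: assumes mem: "x \<in> {1..k}" "z \<in> {1..k}" "m \<in> {1..k}" "m' \<in> {1..k}"
  and bb: "b \<in> MII_V k" "b' \<in> MII_V k" "\<not> MII_E k b b'"
  and eb: "MII_E k b (C x)" "MII_E k b (C z)" "\<not> MII_E k b (C m)"
  and eb': "MII_E k b' (C x)" "MII_E k b' (C z)" "\<not> MII_E k b' (C m')"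
  and ord: "btw (pos x) (pos m) (pos z)" "\<not> btw (pos x) (pos m') (pos z)"
  shows False
proof -
  consider "pos x < pos m" "pos m < pos z" | "pos z < pos m" "pos m < pos x" using ord(1) unfolding btw_def by blast
  then show False
  proof cases
    case 1 then show False using HK1[OF mem bb eb eb'] ord(2) unfolding btw_def by blast
  next
    case 2 then show False using HK1[of z x m m' b b'] mem bb eb eb' ord(2) unfolding btw_def by blast
  qed
qed

lemma contradiction: False
proof -
  have bd: "\<forall>i\<in>{1..k}. pos i < k" using pos_bound by blast
  have st: "\<forall>i. 1 \<le> i \<and> i \<le> k-2 \<longrightarrow> pos (Suc i) = nxt k (pos i) \<or> pos i = nxt k (pos (Suc i))"
    using step by blast
  have mem: "1 \<in> {1..k}" "2 \<in> {1..k}" "k - 1 \<in> {1..k}" "k \<in> {1..k}" using k4 by auto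
  have nb: "\<not> MII_E k B2 B1" using E_B1B2 E_sym by metis
  show False using arith_main[OF k4 bd pos_inj st]
  proof
    assume a: "btw (pos 2) (pos 1) (pos k) \<and> \<not> btw (pos 2) (pos (k - 1)) (pos k)"
    show False
      by (rule HK[of 2 k 1 "k-1" B2 B1]) (use mem a nb k4 in auto)
  next
    assume a: "btw (pos 2) (pos (k - 1)) (pos k) \<and> \<not> btw (pos 2) (pos 1) (pos k)"
    show False
      by (rule HK[of 2 k "k-1" 1 B1 B2]) (use mem a nb k4 in auto)
  qed
qed

end

theorem lemma10:
  fixes k :: nat
  assumes "even k" and "k \<ge> 4"
  shows "\<not> word_representable (MII_V k) (MII_E k)"
proof
  assume "word_representable (MII_V k) (MII_E k)"
  then obtain w where "represents (MII_V k) (MII_E k) w" unfolding word_representable_def by blast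
  then interpret wr k w using assms by unfold_locales auto
  show False by (rule contradiction)
qed

end
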